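(* Assume $\Sigma_0=I$, $T>0$, and $R\in M_d(\mathbb{R})$ is a normal matrix satisfying Property (P1). Consider the characteristic equation (with parameter $\lambda\ge0$) $$\lambda\,{\sf C}=F^\top(R-F),\qquad F:=e^{T({\sf C}-{\sf C}^\top)}e^{T{\sf C}^\top}.$$ (i) For $\lambda=0$, a normal matrix ${\sf C}\in M_d(\mathbb{R})$ solves the equation if and only if $e^{T{\sf C}}=R$, i.e. the normal solutions are ${\sf C}=\frac1T L$ where $L\in M_d(\mathbb{R})$ is a (normal) real matrix logarithm of $R$, $e^{L}=R$. (ii) For each such solution ${\sf C}(0)=\frac1T L$ (with $L$ normal, real, $e^L=R$), there exist a neighborhood $\mathcal{N}\subset\mathbb{R}^+$ of $\lambda=0$ and a continuous map $\mathcal{N}\ni\lambda\mapsto{\sf C}(\lambda)\in M_d(\mathbb{R})$ such that ${\sf C}(\lambda)$ is a (normal) solution of the characteristic equation for each $\lambda\in\mathcal N$, ${\sf C}(0)=\frac1TL$, and $${\sf C}(\lambda)=\frac1T L-\frac{\lambda}{T^2}(RR^\top)^{-1}L+O(\lambda^2)\qquad(\lambda\downarrow0).$$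
   Context: Property (P1): the matrix $R\in M_d(\mathbb{R})$ has no eigenvalues in $\mathbb{R}^-=\{x\in\mathbb{R}: x\le 0\}$, and $R$ is non-derogatory (no eigenvalue of $R$ appears in more than one Jordan block). Under (P1) there exist real matrices $L$ with $e^L=R$ (real matrix logarithms, not necessarily unique). $\mathbb{R}^+=\{x\in\mathbb{R}:x\ge0\}$. A real matrix $M$ is normal if $MM^\top=M^\top M$. The characteristic equation above is the case $\Sigma_0=\mathbb{E}[X_0X_0^\top]=I$ of the equation $\lambda{\sf C}=F^\top(R-F)\Sigma_0$ whose solutions parametrize the critical points $A_t=e^{2t\Omega}{\sf C}e^{-2t\Omega}$, $\Omega=\frac12({\sf C}-{\sf C}^\top)$, of the regularized loss ${\sf J}[A]=\mathbb{E}[\frac\lambda2\int_0^T\mathrm{tr}(A_t^\top A_t)dt+\frac12|X_T-Z|^2]$. *)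

theory Defs
  imports "HOL-Analysis.Analysis"
begin

primrec mpow :: "real^'n^'n \<Rightarrow> nat \<Rightarrow> real^'n^'n" where
  "mpow A 0 = mat 1"
| "mpow A (Suc k) = A ** mpow A k"

definition mexp :: "real^'n^'n \<Rightarrow> real^'n^'n" where
  "mexp A = (\<Sum>k. (1 / fact k) *\<^sub>R mpow A k)"

definition normal_mat :: "real^'n^'n \<Rightarrow> bool" where
  "normal_mat M \<longleftrightarrow> M ** transpose M = transpose M ** M"

definition cmat :: "real^'n^'n \<Rightarrow> complex^'n^'n" where
  "cmat M = (\<chi> i j. complex_of_real (M $ i $ j))"

text \<open>Property (P1): no (real) eigenvalue in (-infinity,0], and non-derogatory:
  every (complex) eigenvalue has geometric multiplicity one, i.e. appears in
  exactly one Jordan block.\<close>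
definition P1 :: "real^'n^'n \<Rightarrow> bool" where
  "P1 R \<longleftrightarrow>
     (\<forall>\<mu>::real. \<forall>v::real^'n. v \<noteq> 0 \<and> R *v v = \<mu> *\<^sub>R v \<longrightarrow> \<mu> > 0) \<and>
     (\<forall>\<mu>::complex. \<forall>u v :: complex^'n.
        cmat R *v u = \<mu> *s u \<and> cmat R *v v = \<mu> *s v \<longrightarrow>
        (\<exists>a b :: complex. (a \<noteq> 0 \<or> b \<noteq> 0) \<and> a *s u + b *s v = 0))"

definition Fmap :: "real \<Rightarrow> real^'n^'n \<Rightarrow> real^'n^'n" where
  "Fmap T C = mexp (T *\<^sub>R (C - transpose C)) ** mexp (T *\<^sub>R transpose C)"

definition char_eq :: "real \<Rightarrow> real^'n^'n \<Rightarrow> real \<Rightarrow> real^'n^'n \<Rightarrow> bool" where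
  "char_eq T R lam C \<longleftrightarrow> lam *\<^sub>R C = transpose (Fmap T C) ** (R - Fmap T C)"

end

theory Submission
  imports Defs
begin


typedef 'n::finite sqm = "UNIV :: (real^'n^'n) set" morphisms Rep_sqm Abs_sqm by auto
setup_lifting type_definition_sqm

instantiation sqm :: (finite) real_vector
begin
lift_definition zero_sqm :: "'a sqm" is 0 .
lift_definition plus_sqm :: "'a sqm \<Rightarrow> 'a sqm \<Rightarrow> 'a sqm" is "(+)" .
lift_definition minus_sqm :: "'a sqm \<Rightarrow> 'a sqm \<Rightarrow> 'a sqm" is "(-)" .
lift_definition uminus_sqm :: "'a sqm \<Rightarrow> 'a sqm" is "uminus" .
lift_definition scaleR_sqm :: "real \<Rightarrow> 'a sqm \<Rightarrow> 'a sqm" is "scaleR" .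
instance by standard (transfer, simp add: algebra_simps)+
end

instantiation sqm :: (finite) ring_1
begin
lift_definition one_sqm :: "'a sqm" is "mat 1" .
lift_definition times_sqm :: "'a sqm \<Rightarrow> 'a sqm \<Rightarrow> 'a sqm" is "(**)" .
instance
proof
  fix a b c :: "'a sqm"
  show "a * b * c = a * (b * c)" by transfer (simp add: matrix_mul_assoc)
  show "1 * a = a" by transfer simp
  show "a * 1 = a" by transfer simp
  show "(a + b) * c = a * c + b * c" by transfer (vector matrix_matrix_mult_def sum.distrib[symmetric] field_simps)
  show "a * (b + c) = a * b + a * c" by transfer (simp add: matrix_add_ldistrib)
  show "(0::'a sqm) \<noteq> 1" apply transfer apply (simp add: mat_def vec_eq_iff) done
qed
end

instance sqm :: (finite) real_algebra_1
proof
  fix a b :: "'a sqm" and r :: real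
  show "r *\<^sub>R a * b = r *\<^sub>R (a * b)" by transfer (simp add: scalar_matrix_assoc)
  show "a * r *\<^sub>R b = r *\<^sub>R (a * b)" by transfer (simp add: matrix_scalar_ac scalar_matrix_assoc)
qed


instantiation sqm :: (finite) real_normed_algebra_1
begin
lift_definition norm_sqm :: "'a sqm \<Rightarrow> real" is "\<lambda>A. onorm ((*v) A)" .
definition dist_sqm :: "'a sqm \<Rightarrow> 'a sqm \<Rightarrow> real" where "dist_sqm a b = norm (a - b)"
definition sgn_sqm :: "'a sqm \<Rightarrow> 'a sqm" where "sgn_sqm x = scaleR (inverse (norm x)) x"
definition [code del]:
  "(uniformity :: ('a sqm \<times> 'a sqm) filter) = (INF e\<in>{0 <..}. principal {(x, y). dist x y < e})"
definition open_sqm :: "'a sqm set \<Rightarrow> bool"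
  where [code del]: "open_sqm S = (\<forall>x\<in>S. \<forall>\<^sub>F (x', y) in uniformity. x' = x \<longrightarrow> y \<in> S)"
instance
proof
  fix a b :: "'a sqm" and r :: real and S :: "'a sqm set"
  show "dist a b = norm (a - b)" by (simp add: dist_sqm_def)
  show "sgn a = inverse (norm a) *\<^sub>R a" by (simp add: sgn_sqm_def)
  show "(uniformity :: ('a sqm \<times> 'a sqm) filter) = (INF e\<in>{0 <..}. principal {(x, y). dist x y < e})"
    by (simp add: uniformity_sqm_def)
  show "open S = (\<forall>x\<in>S. \<forall>\<^sub>F (x', y) in uniformity. x' = x \<longrightarrow> y \<in> S)"
    by (simp add: open_sqm_def)
  show "(norm a = 0) = (a = 0)"
    by transfer (simp add: onorm_eq_0 matrix_eq)
  show "norm (a + b) \<le> norm a + norm b"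
  proof transfer
    fix A B :: "real^'a^'a"
    have "(*v) (A + B) = (\<lambda>x. A *v x + B *v x)"
      by (rule ext) (simp add: matrix_vector_mult_add_rdistrib)
    then show "onorm ((*v) (A + B)) \<le> onorm ((*v) A) + onorm ((*v) B)"
      using onorm_triangle[of "(*v) A" "(*v) B"] by simp
  qed
  show "norm (r *\<^sub>R a) = \<bar>r\<bar> * norm a"
  proof transfer
    fix A :: "real^'a^'a" and r :: real
    have "(*v) (r *\<^sub>R A) = (\<lambda>x. r *\<^sub>R (A *v x))"
      by (rule ext) (simp add: scaleR_matrix_vector_assoc)
    then show "onorm ((*v) (r *\<^sub>R A)) = \<bar>r\<bar> * onorm ((*v) A)"
      using onorm_scaleR[of "(*v) A" r] by simp
  qed
  show "norm (a * b) \<le> norm a * norm b"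
  proof transfer
    fix A B :: "real^'a^'a"
    have "onorm ((*v) (A ** B)) = onorm (((*v) A) o ((*v) B))"
      by (simp add: o_def matrix_vector_mul_assoc)
    also have "\<dots> \<le> onorm ((*v) A) * onorm ((*v) B)"
      by (rule onorm_compose) simp_all
    finally show "onorm ((*v) (A ** B)) \<le> onorm ((*v) A) * onorm ((*v) B)" .
  qed
  show "norm (1::'a sqm) = 1"
  proof transfer
    have "(*v) (mat 1 :: real^'a^'a) = (\<lambda>x. x)" by (rule ext) simp
    then show "onorm ((*v) (mat 1 :: real^'a^'a)) = 1" using onorm_id by simp
  qed
qed
end


lemma frob_le_onorm:
  fixes A :: "real^'n^'n"
  shows "norm A \<le> real CARD('n)^2 * onorm ((*v) A)"
proof -
  have "norm A \<le> (\<Sum>i\<in>UNIV. norm (A $ i))"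
    unfolding norm_vec_def by (rule L2_set_le_sum) simp
  also have "\<dots> \<le> (\<Sum>i\<in>(UNIV::'n set). \<Sum>j\<in>(UNIV::'n set). \<bar>A $ i $ j\<bar>)"
    by (rule sum_mono) (rule norm_le_l1_cart)
  also have "\<dots> \<le> (\<Sum>i\<in>(UNIV::'n set). \<Sum>j\<in>(UNIV::'n set). onorm ((*v) A))"
    by (intro sum_mono matrix_component_le_onorm)
  also have "\<dots> = real CARD('n)^2 * onorm ((*v) A)"
    by (simp add: power2_eq_square)
  finally show ?thesis .
qed

lemma onorm_le_frob:
  fixes A :: "real^'n^'n"
  shows "onorm ((*v) A) \<le> real CARD('n)^2 * norm A"
proof -
  have "\<And>i j. \<bar>A $ i $ j\<bar> \<le> norm A"
  proof -
    fix i j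
    have "\<bar>A $ i $ j\<bar> \<le> norm (A $ i)" by (rule component_le_norm_cart)
    also have "\<dots> \<le> norm A" by (rule Finite_Cartesian_Product.norm_nth_le)
    finally show "\<bar>A $ i $ j\<bar> \<le> norm A" .
  qed
  then have "onorm ((*v) A) \<le> real CARD('n) * real CARD('n) * norm A"
    by (rule onorm_le_matrix_component)
  then show ?thesis by (simp add: power2_eq_square)
qed

lemma Rep_le: "norm (Rep_sqm (x::'n::finite sqm)) \<le> real CARD('n)^2 * norm x"
  by (simp add: norm_sqm.rep_eq frob_le_onorm)

lemma Rep_ge: "norm (x::'n::finite sqm) \<le> real CARD('n)^2 * norm (Rep_sqm x)"
  by (simp add: norm_sqm.rep_eq onorm_le_frob)

instance sqm :: (finite) banach
proof
  fix X :: "nat \<Rightarrow> 'a sqm"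
  assume X: "Cauchy X"
  define c where "c = real CARD('a)^2"
  have c: "c > 0" by (simp add: c_def)
  have "Cauchy (\<lambda>n. Rep_sqm (X n))"
  proof (rule metric_CauchyI)
    fix e :: real assume "e > 0"
    then obtain M where M: "\<forall>m\<ge>M. \<forall>n\<ge>M. dist (X m) (X n) < e / c"
      using X c unfolding Cauchy_def by (meson divide_pos_pos)
    show "\<exists>M. \<forall>m\<ge>M. \<forall>n\<ge>M. dist (Rep_sqm (X m)) (Rep_sqm (X n)) < e"
    proof (intro exI allI impI)
      fix m n assume "M \<le> m" "M \<le> n"
      then have "norm (X m - X n) < e / c" using M by (simp add: dist_norm)
      moreover have "norm (Rep_sqm (X m) - Rep_sqm (X n)) \<le> c * norm (X m - X n)"
        using Rep_le[of "X m - X n"] by (simp add: c_def minus_sqm.rep_eq)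
      ultimately show "dist (Rep_sqm (X m)) (Rep_sqm (X n)) < e"
        using c by (simp add: dist_norm field_simps)
    qed
  qed
  then obtain l where l: "(\<lambda>n. Rep_sqm (X n)) \<longlonglongrightarrow> l"
    using Cauchy_convergent_iff convergent_def by blast
  have "X \<longlonglongrightarrow> Abs_sqm l"
    unfolding LIMSEQ_iff
  proof (intro allI impI)
    fix r :: real assume "r > 0"
    then obtain no where no: "\<forall>n\<ge>no. norm (Rep_sqm (X n) - l) < r / c"
      using l c unfolding LIMSEQ_iff by (meson divide_pos_pos)
    show "\<exists>no. \<forall>n\<ge>no. norm (X n - Abs_sqm l) < r"
    proof (intro exI allI impI)
      fix n assume "no \<le> n"
      have "norm (X n - Abs_sqm l) \<le> c * norm (Rep_sqm (X n - Abs_sqm l))"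
        using Rep_ge c_def by blast
      also have "Rep_sqm (X n - Abs_sqm l) = Rep_sqm (X n) - l"
        by (simp add: minus_sqm.rep_eq Abs_sqm_inverse)
      finally show "norm (X n - Abs_sqm l) < r"
        using no \<open>no \<le> n\<close> c by (smt (verit, ccfv_SIG) mult.commute pos_less_divide_eq)
    qed
  qed
  then show "convergent X" by (auto simp: convergent_def)
qed




lemma exp_rem2_bound:
  fixes z :: "'a::{real_normed_algebra_1,banach}"
  shows "norm (exp z - 1 - z) \<le> exp (norm z) - 1 - norm z"
proof -
  have e1: "exp z - 1 - z = (\<Sum>n. inverse (fact (n + 2)) *\<^sub>R (z ^ (n + 2)))"
    using exp_first_two_terms[of z] by (simp add: algebra_simps)
  have e2: "exp (norm z) - 1 - norm z = (\<Sum>n. inverse (fact (n + 2)) * (norm z ^ (n + 2)))"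
    using exp_first_two_terms[of "norm z"] by (simp add: algebra_simps)
  have s: "summable (\<lambda>n. inverse (fact (n + 2)) * (norm z ^ (n + 2)))"
    using summable_ignore_initial_segment[OF summable_exp[of "norm z"], of 2] by simp
  have "norm (\<Sum>n. inverse (fact (n + 2)) *\<^sub>R (z ^ (n + 2))) \<le> (\<Sum>n. inverse (fact (n + 2)) * (norm z ^ (n + 2)))"
  proof (rule norm_suminf_le[OF _ s])
    fix n
    show "norm (inverse (fact (n + 2)) *\<^sub>R (z ^ (n + 2))) \<le> inverse (fact (n + 2)) * (norm z ^ (n + 2))"
    proof -
      have "norm (z^(n+2)) \<le> norm z^(n+2)" by (rule norm_power_ineq)
      then have "inverse (fact (n + 2)) * norm (z^(n+2)) \<le> inverse (fact (n + 2)) * norm z^(n+2)"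
        by (rule mult_left_mono) simp
      then show ?thesis by simp
    qed
  qed
  then show ?thesis using e1 e2 by simp
qed

lemma exp_rem1_bound:
  fixes z :: "'a::{real_normed_algebra_1,banach}"
  shows "norm (exp z - 1) \<le> exp (norm z) - 1"
proof -
  have e1: "exp z - 1 = (\<Sum>n. inverse (fact (Suc n)) *\<^sub>R (z ^ Suc n))"
    using exp_first_term[of z] by (simp add: algebra_simps)
  have e2: "exp (norm z) - 1 = (\<Sum>n. inverse (fact (Suc n)) * (norm z ^ Suc n))"
    using exp_first_term[of "norm z"] by (simp add: algebra_simps)
  have s: "summable (\<lambda>n. inverse (fact (Suc n)) * (norm z ^ Suc n))"
    using summable_ignore_initial_segment[OF summable_exp[of "norm z"], of 1] by simp
  have "norm (\<Sum>n. inverse (fact (Suc n)) *\<^sub>R (z ^ Suc n)) \<le> (\<Sum>n. inverse (fact (Suc n)) * (norm z ^ Suc n))"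
  proof (rule norm_suminf_le[OF _ s])
    fix n
    show "norm (inverse (fact (Suc n)) *\<^sub>R (z ^ Suc n)) \<le> inverse (fact (Suc n)) * (norm z ^ Suc n)"
    proof -
      have "norm (z^Suc n) \<le> norm z^Suc n" by (rule norm_power_ineq)
      then have "inverse (fact (Suc n)) * norm (z^Suc n) \<le> inverse (fact (Suc n)) * norm z^Suc n"
        by (rule mult_left_mono) simp
      then show ?thesis by simp
    qed
  qed
  then show ?thesis using e1 e2 by simp
qed

lemma exp_rem1_small:
  fixes z :: "'a::{real_normed_algebra_1,banach}"
  assumes "norm z \<le> 1"
  shows "norm (exp z - 1) \<le> 2 * norm z"
proof -
  have "exp (norm z) \<le> 1 + norm z + (norm z)\<^sup>2" using exp_bound[of "norm z"] assms by simp
  moreover have "(norm z)\<^sup>2 \<le> norm z" using assms by (simp add: power2_eq_square mult_left_le)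
  ultimately show ?thesis using exp_rem1_bound[of z] by linarith
qed

lemma exp_rem2_small:
  fixes z :: "'a::{real_normed_algebra_1,banach}"
  assumes "norm z \<le> 1"
  shows "norm (exp z - 1 - z) \<le> (norm z)\<^sup>2"
proof -
  have "exp (norm z) \<le> 1 + norm z + (norm z)\<^sup>2" using exp_bound[of "norm z"] assms by simp
  then show ?thesis using exp_rem2_bound[of z] by linarith
qed

definition Hx :: "'a::{real_normed_algebra_1,banach} \<Rightarrow> 'a" where
  "Hx x = exp x - 1 - x"

lemma Hx_zero[simp]: "Hx 0 = 0" by (simp add: Hx_def)

lemma Hx_lip:
  fixes x y :: "'a::{real_normed_algebra_1,banach}"
  assumes c: "x * y = y * x" and nx: "norm x \<le> \<rho>" and ny: "norm y \<le> \<rho>" and r: "\<rho> \<le> 1/2"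
  shows "norm (Hx x - Hx y) \<le> 6 * \<rho> * norm (x - y)"
proof -
  define d where "d = x - y"
  have yd: "y * d = d * y" using c by (simp add: d_def algebra_simps)
  have ex: "exp x = exp y * exp d"
    using exp_add_commuting[OF yd] by (simp add: d_def)
  have eq: "Hx x - Hx y = (exp y - 1) * (exp d - 1) + (exp d - 1 - d)"
    by (simp add: Hx_def ex d_def algebra_simps)
  have nd: "norm d \<le> 2 * \<rho>" using nx ny norm_triangle_ineq4[of x y] by (simp add: d_def)
  have "norm (exp y - 1) \<le> 2 * norm y" using exp_rem1_small[of y] ny r by simp
  moreover have "norm (exp d - 1) \<le> 2 * norm d" using exp_rem1_small[of d] nd r by simp
  moreover have "norm (exp d - 1 - d) \<le> (norm d)\<^sup>2" using exp_rem2_small[of d] nd r by simp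
  ultimately have "norm (Hx x - Hx y) \<le> (2 * norm y) * (2 * norm d) + (norm d)\<^sup>2"
    unfolding eq
    by (smt (verit, best) mult_mono' norm_ge_zero norm_mult_ineq norm_triangle_ineq)
  also have "\<dots> \<le> (2 * \<rho>) * (2 * norm d) + (2*\<rho>) * norm d"
    using ny nd by (intro add_mono mult_right_mono) (auto simp: power2_eq_square mult_right_mono)
  also have "\<dots> = 6 * \<rho> * norm d" by simp
  finally show ?thesis by (simp add: d_def)
qed

lemma exp_commute:
  fixes x y :: "'a::{real_normed_algebra_1,banach}"
  assumes "x * y = y * x"
  shows "exp x * y = y * exp x"
proof -
  have "(\<lambda>n. x^n /\<^sub>R fact n) sums exp x" unfolding exp_def by (rule summable_sums[OF summable_exp_generic])
  note s = this
  have a: "(\<lambda>n. x^n /\<^sub>R fact n * y) sums (exp x * y)"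
    using s by (rule bounded_linear.sums[OF bounded_linear_mult_left])
  have b: "(\<lambda>n. y * (x^n /\<^sub>R fact n)) sums (y * exp x)"
    using s by (rule bounded_linear.sums[OF bounded_linear_mult_right])
  have "(\<lambda>n. x^n /\<^sub>R fact n * y) = (\<lambda>n. y * (x^n /\<^sub>R fact n))"
    using power_commuting_commutes[OF assms] by (simp add: fun_eq_iff)
  then show ?thesis using a b sums_unique2 by metis
qed




lemma Rep_Abs[simp]: "Rep_sqm (Abs_sqm A) = A" by (simp add: Abs_sqm_inverse)
lemma Abs_Rep[simp]: "Abs_sqm (Rep_sqm x) = x" by (rule Rep_sqm_inverse)
lemma Abs_inj: "Abs_sqm A = Abs_sqm B \<longleftrightarrow> A = B" by (metis Rep_Abs)

lemma Abs_mult: "Abs_sqm (A ** B) = Abs_sqm A * Abs_sqm B" by (simp add: times_sqm.abs_eq)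
lemma Abs_add: "Abs_sqm (A + B) = Abs_sqm A + Abs_sqm B" by (simp add: plus_sqm.abs_eq)
lemma Abs_diff: "Abs_sqm (A - B) = Abs_sqm A - Abs_sqm B" by (simp add: minus_sqm.abs_eq)
lemma Abs_scaleR: "Abs_sqm (r *\<^sub>R A) = r *\<^sub>R Abs_sqm A" by (simp add: scaleR_sqm.abs_eq)
lemma Abs_one: "Abs_sqm (mat 1) = 1" by (simp add: one_sqm_def)
lemma Abs_zero: "Abs_sqm 0 = 0" by (simp add: zero_sqm_def)

definition tr :: "'n::finite sqm \<Rightarrow> 'n sqm" where "tr x = Abs_sqm (transpose (Rep_sqm x))"

lemma Abs_transpose: "Abs_sqm (transpose A) = tr (Abs_sqm A)" by (simp add: tr_def)
lemma tr_mult: "tr (x * y) = tr y * tr x"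
  by (simp add: tr_def times_sqm.rep_eq matrix_transpose_mul Abs_mult)
lemma transpose_add: "transpose (A + B) = transpose A + transpose B"
  by (simp add: transpose_def vec_eq_iff)
lemma transpose_diff: "transpose (A - B) = transpose A - transpose B"
  by (simp add: transpose_def vec_eq_iff)
lemma tr_add: "tr (x + y) = tr x + tr y"
  by (simp add: tr_def plus_sqm.rep_eq transpose_add Abs_add)
lemma tr_diff: "tr (x - y) = tr x - tr y"
  by (simp add: tr_def minus_sqm.rep_eq transpose_diff Abs_diff)
lemma tr_uminus: "tr (- x) = - tr x"
  using tr_diff[of 0 x] tr_diff[of 0 0] by simp
lemma tr_scaleR: "tr (r *\<^sub>R x) = r *\<^sub>R tr x"
  by (simp add: tr_def scaleR_sqm.rep_eq transpose_scalar Abs_scaleR)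
lemma tr_tr[simp]: "tr (tr x) = x" by (simp add: tr_def)
lemma tr_one[simp]: "tr 1 = 1" by (simp add: tr_def one_sqm.rep_eq Abs_one)
lemma tr_zero[simp]: "tr 0 = 0" using tr_diff[of 0 0] by simp
lemma tr_pow: "tr (x ^ n) = (tr x) ^ n"
  by (induct n) (simp_all add: tr_mult power_commutes)

lemma frob_transpose:
  fixes A :: "real^'n^'n"
  shows "norm (transpose A) \<le> real CARD('n)^2 * norm A"
proof -
  have "norm (transpose A) \<le> (\<Sum>i\<in>UNIV. norm (transpose A $ i))"
    unfolding norm_vec_def by (rule L2_set_le_sum) simp
  also have "\<dots> \<le> (\<Sum>i\<in>(UNIV::'n set). \<Sum>j\<in>(UNIV::'n set). \<bar>transpose A $ i $ j\<bar>)"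
    by (rule sum_mono) (rule norm_le_l1_cart)
  also have "\<dots> \<le> (\<Sum>i\<in>(UNIV::'n set). \<Sum>j\<in>(UNIV::'n set). norm A)"
  proof (intro sum_mono)
    fix i j
    have "\<bar>A $ j $ i\<bar> \<le> norm (A $ j)" by (rule component_le_norm_cart)
    also have "\<dots> \<le> norm A" by (rule Finite_Cartesian_Product.norm_nth_le)
    finally show "\<bar>transpose A $ i $ j\<bar> \<le> norm A" by (simp add: transpose_def)
  qed
  also have "\<dots> = real CARD('n)^2 * norm A"
    by (simp add: power2_eq_square)
  finally show ?thesis .
qed

definition ct :: "'n::finite itself \<Rightarrow> real" where "ct _ = real CARD('n)^6"

lemma ct_pos: "ct TYPE('n::finite) > 0" by (simp add: ct_def)

lemma norm_tr: "norm (tr (x::'n::finite sqm)) \<le> ct TYPE('n) * norm x"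
proof -
  define c where "c = real CARD('n)^2"
  have c: "c \<ge> 0" by (simp add: c_def)
  have "norm (tr x) \<le> c * norm (transpose (Rep_sqm x))"
    using Rep_ge[of "tr x"] by (simp add: c_def tr_def)
  also have "\<dots> \<le> c * (c * norm (Rep_sqm x))"
    using frob_transpose[of "Rep_sqm x"] c by (simp only: c_def mult_left_mono)
  also have "\<dots> \<le> c * (c * (c * norm x))"
    using Rep_le[of x] c unfolding c_def by (intro mult_left_mono) simp_all
  finally show ?thesis by (simp add: ct_def c_def power_mult_distrib field_simps eval_nat_numeral)
qed

lemma bl_tr: "bounded_linear (tr :: 'n::finite sqm \<Rightarrow> 'n sqm)"
  by (rule bounded_linear_intro[where K="ct TYPE('n)"]) (simp_all add: tr_add tr_scaleR, metis norm_tr mult.commute)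

lemma bl_Rep: "bounded_linear (Rep_sqm :: 'n::finite sqm \<Rightarrow> real^'n^'n)"
  by (rule bounded_linear_intro[where K="real CARD('n)^2"])
     (auto simp: plus_sqm.rep_eq scaleR_sqm.rep_eq, metis Rep_le mult.commute)

lemma tr_exp: "tr (exp x) = exp (tr x)"
proof -
  have s: "(\<lambda>n. x^n /\<^sub>R fact n) sums exp x" unfolding exp_def by (rule summable_sums[OF summable_exp_generic])
  have "(\<lambda>n. tr (x^n /\<^sub>R fact n)) sums tr (exp x)"
    using s by (rule bounded_linear.sums[OF bl_tr])
  moreover have "(\<lambda>n. (tr x)^n /\<^sub>R fact n) sums exp (tr x)"
    unfolding exp_def by (rule summable_sums[OF summable_exp_generic])
  ultimately show ?thesis by (simp add: tr_scaleR tr_pow sums_unique2)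
qed

lemma Rep_pow: "Rep_sqm (x ^ k) = mpow (Rep_sqm x) k"
  by (induct k) (simp_all add: one_sqm.rep_eq times_sqm.rep_eq)

lemma mexp_Abs: "Abs_sqm (mexp A) = exp (Abs_sqm A)"
proof -
  have s: "(\<lambda>n. (Abs_sqm A)^n /\<^sub>R fact n) sums exp (Abs_sqm A)"
    unfolding exp_def by (rule summable_sums[OF summable_exp_generic])
  have "(\<lambda>n. Rep_sqm ((Abs_sqm A)^n /\<^sub>R fact n)) sums Rep_sqm (exp (Abs_sqm A))"
    using s by (rule bounded_linear.sums[OF bl_Rep])
  then have "(\<lambda>n. (1 / fact n) *\<^sub>R mpow A n) sums Rep_sqm (exp (Abs_sqm A))"
    by (simp add: scaleR_sqm.rep_eq Rep_pow divide_inverse_commute)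
  then have "mexp A = Rep_sqm (exp (Abs_sqm A))"
    unfolding mexp_def by (rule sums_unique[symmetric])
  then show ?thesis by simp
qed




definition comm1 :: "'n::finite sqm \<Rightarrow> 'n sqm set" where
  "comm1 l = {y. y * l = l * y \<and> y * tr l = tr l * y}"
definition bic :: "'n::finite sqm \<Rightarrow> 'n sqm set" where
  "bic l = {x. \<forall>y\<in>comm1 l. x * y = y * x}"

lemma bic_l: "l \<in> bic l" by (auto simp: bic_def comm1_def)
lemma bic_trl: "tr l \<in> bic l" by (auto simp: bic_def comm1_def)

lemma bic_sub: assumes "l * tr l = tr l * l" "x \<in> bic l" shows "x \<in> comm1 l"
proof -
  have "l \<in> comm1 l" "tr l \<in> comm1 l" using assms(1) by (auto simp: comm1_def)
  then show ?thesis using assms(2) by (auto simp: bic_def comm1_def)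
qed

lemma bic_comm: assumes "l * tr l = tr l * l" "x \<in> bic l" "y \<in> bic l" shows "x * y = y * x"
  using bic_sub[OF assms(1,3)] assms(2) by (auto simp: bic_def)

lemma bic_add: "x \<in> bic l \<Longrightarrow> y \<in> bic l \<Longrightarrow> x + y \<in> bic l"
  by (auto simp: bic_def algebra_simps)
lemma bic_diff: "x \<in> bic l \<Longrightarrow> y \<in> bic l \<Longrightarrow> x - y \<in> bic l"
  by (auto simp: bic_def algebra_simps)
lemma bic_uminus: "x \<in> bic l \<Longrightarrow> - x \<in> bic l"
  by (auto simp: bic_def algebra_simps)
lemma bic_mult: "x \<in> bic l \<Longrightarrow> y \<in> bic l \<Longrightarrow> x * y \<in> bic l"
  unfolding bic_def
proof (intro CollectI ballI)
  fix z assume x: "x \<in> {x. \<forall>y\<in>comm1 l. x * y = y * x}" and y: "y \<in> {x. \<forall>y\<in>comm1 l. x * y = y * x}"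
    and z: "z \<in> comm1 l"
  have "x * y * z = x * (y * z)" by (simp add: mult.assoc)
  also have "\<dots> = x * (z * y)" using y z by simp
  also have "\<dots> = (x * z) * y" by (simp add: mult.assoc)
  also have "\<dots> = (z * x) * y" using x z by simp
  also have "\<dots> = z * (x * y)" by (simp add: mult.assoc)
  finally show "x * y * z = z * (x * y)" .
qed
lemma bic_scaleR: "x \<in> bic l \<Longrightarrow> r *\<^sub>R x \<in> bic l"
  by (auto simp: bic_def)
lemma bic_one: "1 \<in> bic l" by (auto simp: bic_def)
lemma bic_zero: "0 \<in> bic l" by (auto simp: bic_def)
lemma bic_exp: "x \<in> bic l \<Longrightarrow> exp x \<in> bic l"
  by (auto simp: bic_def exp_commute)
lemma bic_tr: assumes "x \<in> bic l" shows "tr x \<in> bic l"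
  unfolding bic_def
proof (intro CollectI ballI)
  fix y assume y: "y \<in> comm1 l"
  then have "tr y \<in> comm1 l"
  proof -
    have a: "y * l = l * y" and b: "y * tr l = tr l * y" using y by (auto simp: comm1_def)
    have "tr (y * tr l) = tr (tr l * y)" using b by simp
    then have c: "l * tr y = tr y * l" by (simp add: tr_mult)
    have "tr (y * l) = tr (l * y)" using a by simp
    then have d: "tr l * tr y = tr y * tr l" by (simp add: tr_mult)
    show ?thesis using c d by (simp add: comm1_def)
  qed
  then have "x * tr y = tr y * x" using assms by (auto simp: bic_def)
  then have "tr (x * tr y) = tr (tr y * x)" by simp
  then show "tr x * y = y * tr x" by (simp add: tr_mult)
qed

lemma closed_bic: fixes l :: "'n::finite sqm" shows "closed (bic l)"
proof -
  have "bic l = (\<Inter>y\<in>comm1 l. {x. x * y = y * x})" by (auto simp: bic_def)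
  moreover have "\<forall>y\<in>comm1 l. closed {x. x * y = y * x}"
  proof
    fix y :: "'n sqm"
    show "closed {x. x * y = y * x}"
      using closed_Collect_eq[of "\<lambda>x. x*y" "\<lambda>x. y*x"]
      by (simp add: continuous_on_mult_right continuous_on_mult_left continuous_on_id)
  qed
  ultimately show ?thesis by auto
qed

definition Gx :: "'n::finite sqm \<Rightarrow> 'n sqm" where
  "Gx e = Hx (tr e) - Hx (tr e + e)"

lemma Gx_zero[simp]: "Gx 0 = 0" by (simp add: Gx_def)

lemma Gx_lip:
  fixes e1 e2 :: "'n::finite sqm"
  assumes nl: "l * tr l = tr l * l" and b: "e1 \<in> bic l" "e2 \<in> bic l"
    and n: "norm e1 \<le> r" "norm e2 \<le> r" and r: "(ct TYPE('n) + 1) * r \<le> 1/2"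
  shows "norm (Gx e1 - Gx e2) \<le> 12 * (ct TYPE('n) + 1)^2 * r * norm (e1 - e2)"
proof -
  define c where "c = ct TYPE('n)"
  have c: "c > 0" using ct_pos by (simp add: c_def)
  define \<rho> where "\<rho> = (c + 1) * r"
  have r0: "r \<ge> 0" using n norm_ge_zero order_trans by blast
  have k1: "c * norm e1 \<le> c * r" using n c by (simp add: mult_left_mono)
  have k2: "c * norm e2 \<le> c * r" using n c by (simp add: mult_left_mono)
  have nt1: "norm (tr e1) \<le> c * norm e1" using norm_tr[of e1] by (simp add: c_def)
  have nt2: "norm (tr e2) \<le> c * norm e2" using norm_tr[of e2] by (simp add: c_def)
  have t1: "norm (tr e1) \<le> \<rho>" using nt1 k1 r0 unfolding \<rho>_def by (simp add: algebra_simps)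
  have t2: "norm (tr e2) \<le> \<rho>" using nt2 k2 r0 unfolding \<rho>_def by (simp add: algebra_simps)
  have s1: "norm (tr e1 + e1) \<le> \<rho>" using norm_triangle_ineq[of "tr e1" e1] nt1 k1 n
    unfolding \<rho>_def by (simp add: algebra_simps)
  have s2: "norm (tr e2 + e2) \<le> \<rho>" using norm_triangle_ineq[of "tr e2" e2] nt2 k2 n
    unfolding \<rho>_def by (simp add: algebra_simps)
  have rr: "\<rho> \<le> 1/2" using r by (simp add: \<rho>_def c_def)
  have cm1: "tr e1 * tr e2 = tr e2 * tr e1" using bic_comm[OF nl bic_tr[OF b(1)] bic_tr[OF b(2)]] .
  have cm2: "(tr e1 + e1) * (tr e2 + e2) = (tr e2 + e2) * (tr e1 + e1)"
    using bic_comm[OF nl bic_add[OF bic_tr[OF b(1)] b(1)] bic_add[OF bic_tr[OF b(2)] b(2)]] .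
  have h1: "norm (Hx (tr e1) - Hx (tr e2)) \<le> 6 * \<rho> * norm (tr e1 - tr e2)"
    by (rule Hx_lip[OF cm1 t1 t2 rr])
  have h2: "norm (Hx (tr e1 + e1) - Hx (tr e2 + e2)) \<le> 6 * \<rho> * norm ((tr e1 + e1) - (tr e2 + e2))"
    by (rule Hx_lip[OF cm2 s1 s2 rr])
  have d1: "norm (tr e1 - tr e2) \<le> c * norm (e1 - e2)"
    using norm_tr[of "e1 - e2"] by (simp add: tr_diff c_def)
  have d2: "norm ((tr e1 + e1) - (tr e2 + e2)) \<le> (c + 1) * norm (e1 - e2)"
  proof -
    have "(tr e1 + e1) - (tr e2 + e2) = tr (e1 - e2) + (e1 - e2)" by (simp add: tr_diff)
    then show ?thesis using norm_triangle_ineq[of "tr (e1 - e2)" "e1 - e2"] norm_tr[of "e1 - e2"]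
      by (simp add: c_def algebra_simps)
  qed
  have p: "\<rho> \<ge> 0" using r0 c by (simp add: \<rho>_def)
  have "norm (Gx e1 - Gx e2) \<le> norm (Hx (tr e1) - Hx (tr e2)) + norm (Hx (tr e1 + e1) - Hx (tr e2 + e2))"
    unfolding Gx_def by (rule order_trans[OF _ norm_triangle_ineq4]) (simp add: algebra_simps)
  also have "\<dots> \<le> 6 * \<rho> * (c * norm (e1 - e2)) + 6 * \<rho> * ((c + 1) * norm (e1 - e2))"
    using h1 h2 d1 d2 p by (smt (verit, best) mult_left_mono)
  also have "\<dots> \<le> 12 * (c + 1)^2 * r * norm (e1 - e2)"
    using c r0 by (simp add: \<rho>_def power2_eq_square algebra_simps mult_right_mono mult_left_mono)
  finally show ?thesis by (simp add: c_def)
qed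




lemma main_fix:
  fixes l q :: "'n::finite sqm" and T :: real
  assumes T: "T > 0" and nl: "l * tr l = tr l * l" and q: "q \<in> bic l"
  shows "\<exists>\<delta>>0. \<exists>e. (\<forall>lm\<in>{0..\<delta>}. e lm \<in> bic l \<and> e lm = Gx (e lm) - (lm/T) *\<^sub>R (q * (l + e lm)))
        \<and> e 0 = 0
        \<and> (\<exists>K. \<forall>lm\<in>{0..\<delta>}. \<forall>mu\<in>{0..\<delta>}. norm (e lm - e mu) \<le> K * \<bar>lm - mu\<bar>)
        \<and> (\<exists>K. \<forall>lm\<in>{0..\<delta>}. norm (e lm + (lm/T) *\<^sub>R (q * l)) \<le> K * lm^2)"
proof -
  define c where "c = ct TYPE('n)"
  have c: "c > 0" using ct_pos by (simp add: c_def)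
  define \<kappa> where "\<kappa> = 12 * (c + 1)^2"
  have \<kappa>: "\<kappa> > 0" using c by (simp add: \<kappa>_def)
  define r where "r = min (1/(4*\<kappa>)) (1/(2*(c+1)))"
  have r0: "r > 0" using c \<kappa> by (simp add: r_def)
  have r1: "\<kappa> * r \<le> 1/4"
  proof -
    have "r \<le> 1/(4*\<kappa>)" by (simp add: r_def)
    then have "\<kappa> * r \<le> \<kappa> * (1/(4*\<kappa>))" using \<kappa> by (intro mult_left_mono) auto
    also have "\<dots> = 1/4" using \<kappa> by simp
    finally show ?thesis .
  qed
  have r2: "(c + 1) * r \<le> 1/2"
  proof -
    have "r \<le> 1/(2*(c+1))" by (simp add: r_def)
    then have "(c+1) * r \<le> (c+1) * (1/(2*(c+1)))" using c by (intro mult_left_mono) auto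
    also have "\<dots> = 1/2" using c by simp
    finally show ?thesis .
  qed
  define nq where "nq = norm q"
  define nql where "nql = norm (q * l)"
  have nq0: "nq \<ge> 0" and nql0: "nql \<ge> 0" by (simp_all add: nq_def nql_def)
  define \<delta> where "\<delta> = min (T/(4*(nq+1))) (T*r/(2*(nql+1)))"
  have \<delta>0: "\<delta> > 0" using T r0 nq0 nql0 by (simp add: \<delta>_def)
  have a1: "lm/T * nq \<le> 1/4" if "lm \<in> {0..\<delta>}" for lm
  proof -
    have "lm \<le> T/(4*(nq+1))" using that by (simp add: \<delta>_def)
    then have "lm/T \<le> 1/(4*(nq+1))" using T by (simp add: field_simps)
    then have "lm/T * nq \<le> 1/(4*(nq+1)) * nq" using nq0 by (rule mult_right_mono)
    also have "\<dots> \<le> 1/4" using nq0 by (simp add: field_simps)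
    finally show ?thesis .
  qed
  have a2: "lm/T * nql \<le> r/2" if "lm \<in> {0..\<delta>}" for lm
  proof -
    have "lm \<le> T*r/(2*(nql+1))" using that by (simp add: \<delta>_def)
    then have "lm/T \<le> r/(2*(nql+1))" using T by (simp add: field_simps)
    then have "lm/T * nql \<le> r/(2*(nql+1)) * nql" using nql0 by (rule mult_right_mono)
    also have "\<dots> \<le> r/2" using nql0 r0 by (simp add: field_simps)
    finally show ?thesis .
  qed
  define S where "S = bic l \<inter> cball 0 r"
  define \<Phi> where "\<Phi> lm x = Gx x - (lm/T) *\<^sub>R (q * (l + x))" for lm x
  have Gl: "norm (Gx x - Gx y) \<le> \<kappa> * r' * norm (x - y)"
    if "x \<in> bic l" "y \<in> bic l" "norm x \<le> r'" "norm y \<le> r'" "r' \<le> r" for x y r'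
  proof -
    have "(c + 1) * r' \<le> (c+1) * r" using that c by (simp add: mult_left_mono)
    then have "(c + 1) * r' \<le> 1/2" using r2 by linarith
    then show ?thesis using Gx_lip[OF nl that(1,2,3,4)] by (simp add: \<kappa>_def c_def)
  qed
  have nqx: "norm (q * x) \<le> nq * norm x" for x by (simp add: nq_def norm_mult_ineq)
  have lip: "norm (\<Phi> lm x - \<Phi> lm y) \<le> 1/2 * norm (x - y)"
    if lm: "lm \<in> {0..\<delta>}" and xy: "x \<in> S" "y \<in> S" for lm x y
  proof -
    have xb: "x \<in> bic l" "norm x \<le> r" and yb: "y \<in> bic l" "norm y \<le> r" using xy by (auto simp: S_def)
    have "\<Phi> lm x - \<Phi> lm y = (Gx x - Gx y) - (lm/T) *\<^sub>R (q * (x - y))"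
      by (simp add: \<Phi>_def algebra_simps)
    then have "norm (\<Phi> lm x - \<Phi> lm y) \<le> norm (Gx x - Gx y) + \<bar>lm/T\<bar> * norm (q * (x - y))"
      using norm_triangle_ineq4[of "Gx x - Gx y" "(lm/T) *\<^sub>R (q * (x - y))"] by simp
    also have "\<dots> \<le> \<kappa> * r * norm (x - y) + lm/T * (nq * norm (x - y))"
    proof -
      have a0: "0 \<le> lm/T" using lm T by simp
      have "\<bar>lm/T\<bar> * norm (q * (x - y)) \<le> lm/T * (nq * norm (x - y))"
        unfolding abs_of_nonneg[OF a0] by (rule mult_left_mono[OF nqx a0])
      then show ?thesis using Gl[OF xb(1) yb(1) xb(2) yb(2) order_refl] by linarith
    qed
    also have "\<dots> = (\<kappa> * r + lm/T * nq) * norm (x - y)" by (simp add: algebra_simps)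
    also have "\<dots> \<le> 1/2 * norm (x - y)"
    proof -
      have "\<kappa> * r + lm/T * nq \<le> 1/2" using r1 a1[OF lm] by linarith
      then show ?thesis by (rule mult_right_mono) simp
    qed
    finally show ?thesis .
  qed
  have \<Phi>0: "norm (\<Phi> lm 0) \<le> r/2" if lm: "lm \<in> {0..\<delta>}" for lm
    using a2[OF lm] lm T by (simp add: \<Phi>_def nql_def)
  have maps: "\<Phi> lm x \<in> S" if lm: "lm \<in> {0..\<delta>}" and x: "x \<in> S" for lm x
  proof -
    have xb: "x \<in> bic l" using x by (simp add: S_def)
    have "\<Phi> lm x \<in> bic l"
      unfolding \<Phi>_def Gx_def Hx_def
      by (intro bic_diff bic_add bic_exp bic_tr bic_one bic_scaleR bic_mult q bic_l xb)
    moreover have "norm (\<Phi> lm x) \<le> r"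
    proof -
      have "0 \<in> S" using r0 by (simp add: S_def bic_zero)
      then have "norm (\<Phi> lm x - \<Phi> lm 0) \<le> 1/2 * norm (x - 0)" by (rule lip[OF lm x])
      then have "norm (\<Phi> lm x - \<Phi> lm 0) \<le> 1/2 * norm x" by simp
      moreover have "norm x \<le> r" using x by (simp add: S_def)
      ultimately show ?thesis using \<Phi>0[OF lm] norm_triangle_ineq2[of "\<Phi> lm x" "\<Phi> lm 0"] by linarith
    qed
    ultimately show ?thesis by (simp add: S_def)
  qed
  have S0: "0 \<in> S" using r0 by (simp add: S_def bic_zero)
  have complS: "complete S" unfolding S_def complete_eq_closed
    by (intro closed_Int closed_bic closed_cball)
  have ex: "\<exists>!x\<in>S. \<Phi> lm x = x" if lm: "lm \<in> {0..\<delta>}" for lm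
  proof (rule Banach_fix[OF complS])
    show "S \<noteq> {}" using S0 by blast
    show "(0::real) \<le> 1/2" "(1/2::real) < 1" by simp_all
    show "\<Phi> lm ` S \<subseteq> S" using maps[OF lm] by blast
    show "dist (\<Phi> lm x) (\<Phi> lm y) \<le> 1/2 * dist x y" if "x \<in> S" "y \<in> S" for x y
      using lip[OF lm that] by (simp add: dist_norm)
  qed
  define e where "e lm = (THE x. x \<in> S \<and> \<Phi> lm x = x)" for lm
  have eS: "e lm \<in> S \<and> \<Phi> lm (e lm) = e lm" if lm: "lm \<in> {0..\<delta>}" for lm
    unfolding e_def using theI'[OF ex[OF lm]] .
  have e0: "e 0 = 0"
  proof -
    have z: "(0::real) \<in> {0..\<delta>}" using \<delta>0 by simp
    have "\<Phi> 0 0 = 0" by (simp add: \<Phi>_def)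
    then show ?thesis using eS[OF z] ex[OF z] S0 by blast
  qed
  have ebound: "norm (e lm) \<le> 2 * (lm/T * nql)" if lm: "lm \<in> {0..\<delta>}" for lm
  proof -
    have "norm (e lm) = norm (\<Phi> lm (e lm))" using eS[OF lm] by simp
    also have "\<dots> \<le> norm (\<Phi> lm (e lm) - \<Phi> lm 0) + norm (\<Phi> lm 0)" using norm_triangle_ineq[of "\<Phi> lm (e lm) - \<Phi> lm 0" "\<Phi> lm 0"] by simp
    also have "\<dots> \<le> 1/2 * norm (e lm) + lm/T * nql"
    proof -
      have "norm (\<Phi> lm (e lm) - \<Phi> lm 0) \<le> 1/2 * norm (e lm)" using lip[OF lm _ S0, of "e lm"] eS[OF lm] by (metis diff_zero)
      moreover have "norm (\<Phi> lm 0) = lm/T * nql" using lm T by (simp add: \<Phi>_def nql_def)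
      ultimately show ?thesis by linarith
    qed
    finally show ?thesis by linarith
  qed
  show ?thesis
  proof (rule exI[of _ \<delta>], intro conjI \<delta>0, rule exI[of _ e], intro conjI ballI)
    fix lm assume lm: "lm \<in> {0..\<delta>}"
    show "e lm \<in> bic l" using eS[OF lm] by (simp add: S_def)
    show "e lm = Gx (e lm) - (lm/T) *\<^sub>R (q * (l + e lm))" using eS[OF lm] by (simp add: \<Phi>_def)
  next
    show "e 0 = 0" by (rule e0)
  next
    show "\<exists>K. \<forall>lm\<in>{0..\<delta>}. \<forall>mu\<in>{0..\<delta>}. norm (e lm - e mu) \<le> K * \<bar>lm - mu\<bar>"
    proof (intro exI[of _ "2 * (nq * (norm l + r) / T)"] ballI)
      fix lm mu assume lm: "lm \<in> {0..\<delta>}" and mu: "mu \<in> {0..\<delta>}"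
      have em: "e mu \<in> S" using eS[OF mu] by simp
      have nem: "norm (e mu) \<le> r" using em by (simp add: S_def)
      have "e lm - e mu = (\<Phi> lm (e lm) - \<Phi> lm (e mu)) + (\<Phi> lm (e mu) - \<Phi> mu (e mu))"
        using eS[OF lm] eS[OF mu] by simp
      then have t1: "norm (e lm - e mu) \<le> norm (\<Phi> lm (e lm) - \<Phi> lm (e mu)) + norm (\<Phi> lm (e mu) - \<Phi> mu (e mu))"
        using norm_triangle_ineq[of "\<Phi> lm (e lm) - \<Phi> lm (e mu)" "\<Phi> lm (e mu) - \<Phi> mu (e mu)"] by simp
      have t2: "norm (\<Phi> lm (e lm) - \<Phi> lm (e mu)) \<le> 1/2 * norm (e lm - e mu)"
        using lip[OF lm conjunct1[OF eS[OF lm]] em] .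
      have t3: "\<Phi> lm (e mu) - \<Phi> mu (e mu) = ((mu - lm)/T) *\<^sub>R (q * (l + e mu))"
        by (simp add: \<Phi>_def algebra_simps diff_divide_distrib)
      have t4: "norm (((mu - lm)/T) *\<^sub>R (q * (l + e mu))) \<le> \<bar>lm - mu\<bar> * (nq * (norm l + r)) / T"
      proof -
        have "norm (q * (l + e mu)) \<le> nq * (norm l + r)"
        proof -
          have "norm (l + e mu) \<le> norm l + r" using norm_triangle_ineq[of l "e mu"] nem by linarith
          then have "nq * norm (l + e mu) \<le> nq * (norm l + r)" using nq0 by (rule mult_left_mono)
          then show ?thesis using nqx[of "l + e mu"] by linarith
        qed
        then have "\<bar>lm - mu\<bar> * norm (q * (l + e mu)) \<le> \<bar>lm - mu\<bar> * (nq * (norm l + r))"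
          by (rule mult_left_mono) simp
        then have "\<bar>lm - mu\<bar> * norm (q * (l + e mu)) / T \<le> \<bar>lm - mu\<bar> * (nq * (norm l + r)) / T"
          using T by (simp add: divide_right_mono)
        then show ?thesis using T by (simp add: abs_minus_commute)
      qed
      have "norm (e lm - e mu) \<le> 2 * (\<bar>lm - mu\<bar> * (nq * (norm l + r)) / T)"
        using t1 t2 t4[folded t3] by linarith
      then have "norm (e lm - e mu) \<le> 2 * (nq * (norm l + r) / T) * \<bar>lm - mu\<bar>"
        by (simp add: field_simps)
      then show "norm (e lm - e mu) \<le> (2 * (nq * (norm l + r) / T)) * \<bar>lm - mu\<bar>" .
    qed
  next
    show "\<exists>K. \<forall>lm\<in>{0..\<delta>}. norm (e lm + (lm/T) *\<^sub>R (q * l)) \<le> K * lm^2"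
    proof (intro exI[of _ "(4 * \<kappa> * nql^2 + 2 * nq * nql) / T^2"] ballI)
      fix lm assume lm: "lm \<in> {0..\<delta>}"
      define a where "a = lm/T"
      have a0: "a \<ge> 0" using lm T by (simp add: a_def)
      define x where "x = e lm"
      have xS: "x \<in> bic l" "norm x \<le> r" using eS[OF lm] by (simp_all add: S_def x_def)
      have xb: "norm x \<le> 2 * (a * nql)" using ebound[OF lm] by (simp add: x_def a_def)
      have eq: "x + a *\<^sub>R (q * l) = Gx x - a *\<^sub>R (q * x)"
      proof -
        have "x = Gx x - a *\<^sub>R (q * (l + x))" using eS[OF lm] by (simp add: \<Phi>_def x_def a_def)
        then show ?thesis by (simp add: algebra_simps)
      qed
      have g: "norm (Gx x) \<le> \<kappa> * norm x * norm x"
        using Gl[OF xS(1) bic_zero order_refl _ xS(2)] by simp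
      have "norm (x + a *\<^sub>R (q * l)) \<le> norm (Gx x) + a * (nq * norm x)"
      proof -
        have "norm (Gx x - a *\<^sub>R (q * x)) \<le> norm (Gx x) + a * norm (q * x)"
          using norm_triangle_ineq4[of "Gx x" "a *\<^sub>R (q * x)"] a0 by simp
        moreover have "a * norm (q * x) \<le> a * (nq * norm x)" using nqx[of x] a0 by (rule mult_left_mono)
        ultimately show ?thesis unfolding eq by linarith
      qed
      also have "\<dots> \<le> \<kappa> * (2 * (a * nql)) * (2 * (a * nql)) + a * (nq * (2 * (a * nql)))"
      proof -
        have "norm x * norm x \<le> (2 * (a * nql)) * (2 * (a * nql))"
          using xb a0 nql0 by (intro mult_mono) auto
        then have "\<kappa> * norm x * norm x \<le> \<kappa> * (2 * (a * nql)) * (2 * (a * nql))"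
          using \<kappa> by (simp add: mult.assoc mult_left_mono)
        moreover have "a * (nq * norm x) \<le> a * (nq * (2 * (a * nql)))"
          using xb a0 nq0 by (intro mult_left_mono) auto
        ultimately show ?thesis using g by linarith
      qed
      also have "\<dots> = ((4 * \<kappa> * nql^2 + 2 * nq * nql) / T^2) * lm^2"
        using T by (simp add: a_def field_simps power2_eq_square)
      finally show "norm (e lm + (lm/T) *\<^sub>R (q * l)) \<le> ((4 * \<kappa> * nql^2 + 2 * nq * nql) / T^2) * lm^2"
        by (simp add: x_def a_def)
    qed
  qed
qed




lemma Fmap_Abs: "Abs_sqm (Fmap T C) = exp (T *\<^sub>R (Abs_sqm C - tr (Abs_sqm C))) * exp (T *\<^sub>R tr (Abs_sqm C))"
  by (simp add: Fmap_def Abs_mult mexp_Abs Abs_scaleR Abs_diff Abs_transpose)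

lemma char_eq_Abs: "char_eq T R lam C \<longleftrightarrow>
   lam *\<^sub>R Abs_sqm C = tr (Abs_sqm (Fmap T C)) * (Abs_sqm R - Abs_sqm (Fmap T C))"
  unfolding char_eq_def
  by (simp add: Abs_inj[symmetric] Abs_scaleR Abs_mult Abs_transpose Abs_diff)

lemma normal_Abs: "normal_mat C \<longleftrightarrow> Abs_sqm C * tr (Abs_sqm C) = tr (Abs_sqm C) * Abs_sqm C"
  unfolding normal_mat_def by (simp add: Abs_inj[symmetric] Abs_mult Abs_transpose)

lemma Fmap_normal:
  assumes "c * tr c = tr c * c"
  shows "exp (T *\<^sub>R (c - tr c)) * exp (T *\<^sub>R tr c) = exp (T *\<^sub>R c)"
proof -
  have "(T *\<^sub>R (c - tr c)) * (T *\<^sub>R tr c) = (T *\<^sub>R tr c) * (T *\<^sub>R (c - tr c))"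
    using assms by (simp add: algebra_simps)
  then have "exp (T *\<^sub>R (c - tr c) + T *\<^sub>R tr c) = exp (T *\<^sub>R (c - tr c)) * exp (T *\<^sub>R tr c)"
    by (rule exp_add_commuting)
  then show ?thesis by (simp add: algebra_simps)
qed

lemma part1:
  fixes R C :: "real^'n^'n"
  assumes "normal_mat C"
  shows "char_eq T R 0 C \<longleftrightarrow> mexp (T *\<^sub>R C) = R"
proof -
  define c where "c = Abs_sqm C"
  define rr where "rr = Abs_sqm R"
  have nc: "c * tr c = tr c * c" using assms by (simp add: normal_Abs c_def)
  define f where "f = exp (T *\<^sub>R c)"
  have F: "Abs_sqm (Fmap T C) = f" using Fmap_normal[OF nc, of T] by (simp add: Fmap_Abs c_def f_def)
  have ce: "char_eq T R 0 C \<longleftrightarrow> 0 = tr f * (rr - f)" by (simp add: char_eq_Abs F rr_def)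
  have inv: "exp (- tr (T *\<^sub>R c)) * tr f = 1"
    using exp_minus_inverse[of "- tr (T *\<^sub>R c)"] by (simp add: f_def tr_exp)
  have "0 = tr f * (rr - f) \<longleftrightarrow> rr = f"
  proof
    assume "0 = tr f * (rr - f)"
    then have "exp (- tr (T *\<^sub>R c)) * tr f * (rr - f) = 0" by (simp add: mult.assoc)
    then show "rr = f" using inv by simp
  qed simp
  moreover have "mexp (T *\<^sub>R C) = R \<longleftrightarrow> rr = f"
    by (simp add: Abs_inj[symmetric] mexp_Abs Abs_scaleR f_def c_def rr_def eq_commute)
  ultimately show ?thesis using ce by simp
qed


lemma inv_unique:
  fixes P B :: "real^'n^'n"
  assumes "P ** B = mat 1" "B ** P = mat 1"
  shows "matrix_inv P = B"
proof -
  have ex: "\<exists>A'. P ** A' = mat 1 \<and> A' ** P = mat 1" using assms by blast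
  define M where "M = matrix_inv P"
  have M: "P ** M = mat 1 \<and> M ** P = mat 1"
    unfolding M_def matrix_inv_def by (rule someI_ex[OF ex])
  have "M = M ** (P ** B)" using assms by simp
  also have "\<dots> = (M ** P) ** B" by (simp add: matrix_mul_assoc)
  also have "\<dots> = B" using M by simp
  finally show ?thesis by (simp add: M_def)
qed

lemma part2:
  fixes R L :: "real^'n^'n" and T :: real
  assumes T: "T > 0" and nL: "normal_mat L" and eL: "mexp L = R"
  shows "\<exists>\<delta>>0. \<exists>Cf :: real \<Rightarrow> real^'n^'n.
            continuous_on {0..<\<delta>} Cf
          \<and> (\<forall>lam\<in>{0..<\<delta>}. char_eq T R lam (Cf lam) \<and> normal_mat (Cf lam))
          \<and> Cf 0 = (1 / T) *\<^sub>R L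
          \<and> (\<exists>K \<epsilon>. \<epsilon> > 0 \<and> (\<forall>lam\<in>{0..<\<delta>}. lam < \<epsilon> \<longrightarrow>
                norm (Cf lam - ((1 / T) *\<^sub>R L
                   - (lam / T\<^sup>2) *\<^sub>R (matrix_inv (R ** transpose R) ** L)))
                \<le> K * lam\<^sup>2))"
proof -
  define l where "l = Abs_sqm L"
  define rr where "rr = Abs_sqm R"
  have nl: "l * tr l = tr l * l" using nL by (simp add: normal_Abs l_def)
  have rr: "rr = exp l" using eL by (simp add: rr_def l_def mexp_Abs[symmetric])
  define q where "q = exp (- l) * exp (- tr l)"
  have bl: "l \<in> bic l" "tr l \<in> bic l" by (rule bic_l, rule bic_trl)
  have qb: "q \<in> bic l" unfolding q_def
    by (intro bic_mult bic_exp bic_uminus bl)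
  have rrb: "rr \<in> bic l" "tr rr \<in> bic l" unfolding rr by (intro bic_exp bic_tr bl)+
  define p where "p = rr * tr rr"
  have pb: "p \<in> bic l" unfolding p_def by (intro bic_mult rrb)
  have pq: "p * q = 1"
  proof -
    have c1: "tr rr * exp (- l) = exp (- l) * tr rr"
      using bic_comm[OF nl rrb(2) bic_exp[OF bic_uminus[OF bl(1)]]] .
    have "p * q = rr * (tr rr * exp (- l)) * exp (- tr l)" by (simp add: p_def q_def mult.assoc)
    also have "\<dots> = (rr * exp (- l)) * (tr rr * exp (- tr l))" by (simp add: c1 mult.assoc)
    also have "\<dots> = 1" by (simp add: rr tr_exp exp_minus_inverse)
    finally show ?thesis .
  qed
  have qp: "q * p = 1" using pq bic_comm[OF nl pb qb] by simp
  have minv: "matrix_inv (R ** transpose R) = Rep_sqm q"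
  proof (rule inv_unique)
    have "Abs_sqm (R ** transpose R) = p" by (simp add: Abs_mult Abs_transpose p_def rr_def)
    then have P: "R ** transpose R = Rep_sqm p" by (metis Rep_Abs)
    show "R ** transpose R ** Rep_sqm q = mat 1" unfolding P
      by (metis pq times_sqm.rep_eq one_sqm.rep_eq)
    show "Rep_sqm q ** (R ** transpose R) = mat 1" unfolding P
      by (metis qp times_sqm.rep_eq one_sqm.rep_eq)
  qed
  obtain \<delta> e where \<delta>: "\<delta> > 0"
    and fx: "\<forall>lm\<in>{0..\<delta>}. e lm \<in> bic l \<and> e lm = Gx (e lm) - (lm/T) *\<^sub>R (q * (l + e lm))"
    and e0: "e 0 = 0"
    and lipK: "\<exists>K. \<forall>lm\<in>{0..\<delta>}. \<forall>mu\<in>{0..\<delta>}. norm (e lm - e mu) \<le> K * \<bar>lm - mu\<bar>"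
    and asK: "\<exists>K. \<forall>lm\<in>{0..\<delta>}. norm (e lm + (lm/T) *\<^sub>R (q * l)) \<le> K * lm^2"
    using main_fix[OF T nl qb] by blast
  define Cf where "Cf lam = Rep_sqm ((1/T) *\<^sub>R (l + e lam))" for lam
  have AbsCf: "Abs_sqm (Cf lam) = (1/T) *\<^sub>R (l + e lam)" for lam by (simp add: Cf_def)
  have cont_e: "continuous_on {0..\<delta>} e"
  proof -
    obtain K where K: "\<forall>lm\<in>{0..\<delta>}. \<forall>mu\<in>{0..\<delta>}. norm (e lm - e mu) \<le> K * \<bar>lm - mu\<bar>"
      using lipK by blast
    show ?thesis unfolding continuous_on_iff
    proof (intro ballI allI impI)
      fix x \<epsilon> :: real assume x: "x \<in> {0..\<delta>}" and \<epsilon>: "\<epsilon> > 0"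
      show "\<exists>d>0. \<forall>x'\<in>{0..\<delta>}. dist x' x < d \<longrightarrow> dist (e x') (e x) < \<epsilon>"
      proof (intro exI[of _ "\<epsilon> / (\<bar>K\<bar> + 1)"] conjI ballI impI)
        show "\<epsilon> / (\<bar>K\<bar> + 1) > 0" using \<epsilon> by simp
        fix x' assume x': "x' \<in> {0..\<delta>}" and d: "dist x' x < \<epsilon> / (\<bar>K\<bar> + 1)"
        have "dist (e x') (e x) \<le> K * \<bar>x' - x\<bar>" using K x x' by (simp add: dist_norm)
        also have "\<dots> \<le> \<bar>K\<bar> * \<bar>x' - x\<bar>" by (simp add: mult_right_mono)
        also have "\<dots> \<le> \<bar>K\<bar> * (\<epsilon> / (\<bar>K\<bar> + 1))"
          using d unfolding dist_real_def by (intro mult_left_mono) auto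
        also have "\<dots> < \<epsilon>" using \<epsilon> by (simp add: field_simps)
        finally show "dist (e x') (e x) < \<epsilon>" .
      qed
    qed
  qed
  have contCf: "continuous_on {0..\<delta>} Cf"
    unfolding Cf_def
    by (intro bounded_linear.continuous_on[OF bl_Rep] continuous_intros cont_e)
  show ?thesis
  proof (rule exI[of _ \<delta>], intro conjI \<delta>, rule exI[of _ Cf], intro conjI)
    show "continuous_on {0..<\<delta>} Cf" by (rule continuous_on_subset[OF contCf]) auto
    show "Cf 0 = (1 / T) *\<^sub>R L" by (simp add: Cf_def e0 l_def scaleR_sqm.rep_eq)
    show "\<forall>lam\<in>{0..<\<delta>}. char_eq T R lam (Cf lam) \<and> normal_mat (Cf lam)"
    proof
      fix lam assume lam: "lam \<in> {0..<\<delta>}"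
      then have lam': "lam \<in> {0..\<delta>}" by simp
      define x where "x = e lam"
      have xb: "x \<in> bic l" and xf: "x = Gx x - (lam/T) *\<^sub>R (q * (l + x))" using fx lam' by (simp_all add: x_def)
      define cc where "cc = (1/T) *\<^sub>R (l + x)"
      have ccb: "cc \<in> bic l" unfolding cc_def by (intro bic_scaleR bic_add bl xb)
      have ncc: "cc * tr cc = tr cc * cc" by (rule bic_comm[OF nl ccb bic_tr[OF ccb]])
      have Acc: "Abs_sqm (Cf lam) = cc" by (simp add: AbsCf cc_def x_def)
      have nm: "normal_mat (Cf lam)" using ncc by (simp add: normal_Abs Acc)
      have Tcc: "T *\<^sub>R cc = l + x" using T by (simp add: cc_def)
      have lx: "l * x = x * l" by (rule bic_comm[OF nl bl(1) xb])
      have F: "Abs_sqm (Fmap T (Cf lam)) = rr * exp x"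
        by (simp add: Fmap_Abs Acc Fmap_normal[OF ncc] Tcc exp_add_commuting[OF lx] rr)
      have trF: "tr (rr * exp x) = exp (tr x) * tr rr" by (simp add: tr_mult tr_exp)
      have txx: "tr x * x = x * tr x" by (rule bic_comm[OF nl bic_tr[OF xb] xb])
      have gx: "Gx x - x = exp (tr x) * (1 - exp x)"
        unfolding Gx_def Hx_def exp_add_commuting[OF txx] by (simp add: algebra_simps)
      have key: "(lam/T) *\<^sub>R (q * (l + x)) = exp (tr x) * (1 - exp x)"
      proof -
        have "(lam/T) *\<^sub>R (q * (l + x)) = Gx x - x" using xf by (simp add: algebra_simps)
        then show ?thesis using gx by simp
      qed
      have c2: "exp (tr x) * p = p * exp (tr x)"
        by (rule bic_comm[OF nl bic_exp[OF bic_tr[OF xb]] pb])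
      have c3: "tr rr * rr = rr * tr rr" by (rule bic_comm[OF nl rrb(2) rrb(1)])
      have "tr (rr * exp x) * (rr - rr * exp x) = exp (tr x) * (tr rr * rr) * (1 - exp x)"
        by (simp add: trF algebra_simps mult.assoc)
      also have "\<dots> = p * (exp (tr x) * (1 - exp x))"
        by (simp add: c3 p_def[symmetric] c2 mult.assoc[symmetric])
      also have "\<dots> = p * ((lam/T) *\<^sub>R (q * (l + x)))" by (simp add: key)
      also have "\<dots> = (lam/T) *\<^sub>R (l + x)" by (simp add: mult.assoc[symmetric] pq)
      also have "\<dots> = lam *\<^sub>R cc" by (simp add: cc_def)
      finally have "char_eq T R lam (Cf lam)"
        by (simp add: char_eq_Abs F Acc rr_def[symmetric])
      with nm show "char_eq T R lam (Cf lam) \<and> normal_mat (Cf lam)" by simp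
    qed
    obtain K where K: "\<forall>lm\<in>{0..\<delta>}. norm (e lm + (lm/T) *\<^sub>R (q * l)) \<le> K * lm^2"
      using asK by blast
    show "\<exists>K \<epsilon>. \<epsilon> > 0 \<and> (\<forall>lam\<in>{0..<\<delta>}. lam < \<epsilon> \<longrightarrow>
                norm (Cf lam - ((1 / T) *\<^sub>R L
                   - (lam / T\<^sup>2) *\<^sub>R (matrix_inv (R ** transpose R) ** L)))
                \<le> K * lam\<^sup>2)"
    proof (rule exI[of _ "real CARD('n)^2 / T * K"], rule exI[of _ \<delta>], intro conjI \<delta> ballI impI)
      fix lam assume lam: "lam \<in> {0..<\<delta>}"
      define D where "D = Cf lam - ((1 / T) *\<^sub>R L - (lam / T\<^sup>2) *\<^sub>R (matrix_inv (R ** transpose R) ** L))"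
      have "Abs_sqm D = (1/T) *\<^sub>R (e lam + (lam/T) *\<^sub>R (q * l))"
      proof -
        have "Abs_sqm D = Abs_sqm (Cf lam) - ((1/T) *\<^sub>R Abs_sqm L - (lam / T\<^sup>2) *\<^sub>R (Abs_sqm (Rep_sqm q) * Abs_sqm L))"
          unfolding D_def minv by (simp only: Abs_diff Abs_scaleR Abs_mult)
        also have "\<dots> = (1/T) *\<^sub>R (e lam + (lam/T) *\<^sub>R (q * l))"
          unfolding AbsCf l_def[symmetric] Abs_Rep using T by (simp add: algebra_simps power2_eq_square)
        finally show ?thesis .
      qed
      then have D: "D = Rep_sqm ((1/T) *\<^sub>R (e lam + (lam/T) *\<^sub>R (q * l)))" by (metis Rep_Abs)
      have "norm D \<le> real CARD('n)^2 * norm ((1/T) *\<^sub>R (e lam + (lam/T) *\<^sub>R (q * l)))"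
        unfolding D by (rule Rep_le)
      also have "\<dots> = real CARD('n)^2 / T * norm (e lam + (lam/T) *\<^sub>R (q * l))"
        using T by simp
      also have "\<dots> \<le> real CARD('n)^2 / T * (K * lam^2)"
        using K lam T by (intro mult_left_mono) auto
      finally show "norm D \<le> real CARD('n)^2 / T * K * lam\<^sup>2" by (simp add: mult.assoc)
    qed
  qed
qed


theorem theorem2:
  fixes R :: "real^'n^'n" and T :: real
  assumes "T > 0" and "normal_mat R" and "P1 R"
  shows "(\<forall>C :: real^'n^'n. normal_mat C \<longrightarrow> (char_eq T R 0 C \<longleftrightarrow> mexp (T *\<^sub>R C) = R))
    \<and> (\<forall>L :: real^'n^'n. normal_mat L \<and> mexp L = R \<longrightarrow>
         (\<exists>\<delta>>0. \<exists>Cf :: real \<Rightarrow> real^'n^'n.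
            continuous_on {0..<\<delta>} Cf
          \<and> (\<forall>lam\<in>{0..<\<delta>}. char_eq T R lam (Cf lam) \<and> normal_mat (Cf lam))
          \<and> Cf 0 = (1 / T) *\<^sub>R L
          \<and> (\<exists>K \<epsilon>. \<epsilon> > 0 \<and> (\<forall>lam\<in>{0..<\<delta>}. lam < \<epsilon> \<longrightarrow>
                norm (Cf lam - ((1 / T) *\<^sub>R L
                   - (lam / T\<^sup>2) *\<^sub>R (matrix_inv (R ** transpose R) ** L)))
                \<le> K * lam\<^sup>2))))"
    using part1[of _ T R] part2[OF assms(1)] assms(1) by blast

end
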